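(* For every integer $k\geq 3$, the set of odd positive integers not in $\mathcal F(k)$ is nonempty and finite, and $\Gamma(k)\leq 3k-4$. Moreover, $\displaystyle\limsup_{k\to\infty}\frac{\Gamma(k)}{k}=3$.
   Context: The Thue–Morse word is $\mathbf t=\mathbf t_1\mathbf t_2\cdots$ where $\mathbf t_i\in\{0,1\}$ has the parity of the number of $1$'s in the binary expansion of $i-1$. For positive integers $\alpha\le\beta$, $\langle\alpha,\beta\rangle=\mathbf t_\alpha\cdots\mathbf t_\beta$. A $k$-anti-power is a word $w_1\cdots w_k$ with $w_1,\dots,w_k$ pairwise distinct words of equal length. $\mathcal F(k)$ is the set of odd positive integers $m$ such that $\langle 1,km\rangle$ is a $k$-anti-power. $\Gamma(k)=\sup\big((2\mathbb Z^+-1)\setminus\mathcal F(k)\big)$, the largest odd positive integer not in $\mathcal F(k)$. *)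

theory Defs
  imports "HOL-Analysis.Analysis"
begin

fun popcount :: "nat \<Rightarrow> nat" where
  "popcount n = (if n = 0 then 0 else n mod 2 + popcount (n div 2))"
declare popcount.simps[simp del]

text \<open>Thue--Morse word, 1-indexed: thue i is the letter t_i (for i \<ge> 1).\<close>
definition thue :: "nat \<Rightarrow> nat" where
  "thue i = popcount (i - 1) mod 2"

definition tm_factor :: "nat \<Rightarrow> nat \<Rightarrow> nat list" where
  "tm_factor a b = map thue [a..<b+1]"

definition anti_power :: "nat \<Rightarrow> 'a list \<Rightarrow> bool" where
  "anti_power k w \<longleftrightarrow> k > 0 \<and> length w mod k = 0 \<and>
     (let m = length w div k in
       \<forall>i<k. \<forall>j<k. i \<noteq> j \<longrightarrow> take m (drop (i*m) w) \<noteq> take m (drop (j*m) w))"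

definition FF :: "nat \<Rightarrow> nat set" where
  "FF k = {m. odd m \<and> anti_power k (tm_factor 1 (k*m))}"

definition Gamma :: "nat \<Rightarrow> nat" where
  "Gamma k = Sup ({m. odd m} - FF k)"

end

theory Submission
  imports Defs "HOL-Real_Asymp.Real_Asymp"
begin

definition X :: "nat \<Rightarrow> nat" where "X n = popcount n mod 2"

lemma popcount_0[simp]: "popcount 0 = 0" by (simp add: popcount.simps)

lemma popcount_2n: "e < 2 \<Longrightarrow> popcount (2*n + e) = popcount n + e"
  by (subst popcount.simps) (auto)

lemma popcount_pow: "r < 2^a \<Longrightarrow> popcount (2^a * q + r) = popcount q + popcount r"
proof (induction a arbitrary: q r)
  case 0 then show ?case by (simp add: popcount.simps)
next
  case (Suc a)
  have r: "r = 2 * (r div 2) + r mod 2" by simp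
  have rd: "r div 2 < 2^a" using Suc.prems by auto
  have eq: "2^Suc a * q + r = 2 * (2^a*q + r div 2) + r mod 2" by simp
  have "popcount (2^Suc a * q + r) = popcount (2^a*q + r div 2) + r mod 2"
    unfolding eq by (rule popcount_2n) simp
  also have "\<dots> = popcount q + (popcount (r div 2) + r mod 2)" using Suc.IH[OF rd] by simp
  also have "popcount (r div 2) + r mod 2 = popcount r"
    using popcount_2n[of "r mod 2" "r div 2"] r by simp
  finally show ?case .
qed

lemma X_2n: "e < 2 \<Longrightarrow> X (2*n + e) = (X n + e) mod 2"
  unfolding X_def using popcount_2n by (simp add: mod_add_left_eq)

lemma X_2n0: "X (2*n) = X n" using X_2n[of 0 n] by (simp add: X_def)
lemma X_2n1: "X (2*n+1) = 1 - X n" using X_2n[of 1 n] unfolding X_def by presburger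
lemma X_le: "X n < 2" by (simp add: X_def)

lemma no_cube: "X q = X (q+1) \<Longrightarrow> X (q+1) = X (q+2) \<Longrightarrow> False"
proof (cases "even q")
  case True
  then obtain p where p: "q = 2*p" by auto
  assume h: "X q = X (q+1)"
  have "X q = X p" using p X_2n0 by simp
  moreover have "X (q+1) = 1 - X p" using p X_2n1 by simp
  ultimately show False using h X_le[of p] by arith
next
  case False
  then obtain p0 where "q = 2*p0+1" using oddE by blast
  then obtain p where p: "q + 1 = 2*(p+1)" by (intro that[of p0]) simp
  assume h: "X (q+1) = X (q+2)"
  have "X (q+1) = X (p+1)" unfolding p by (rule X_2n0)
  moreover have "X (q+2) = 1 - X (p+1)" using p X_2n1[of "p+1"] by (simp add: numeral_2_eq_2)
  ultimately show False using h X_le[of "p+1"] by arith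
qed

lemma base_eo: assumes "\<forall>r<4. X (2*p + r) = X (2*q+1 + r)" shows False
proof -
  have e0: "X (2*p) = X (2*q+1)" using assms[rule_format, of 0] by simp
  have e1: "X (2*p+1) = X (2*(q+1))" using assms[rule_format, of 1] by (simp add: algebra_simps)
  have e2: "X (2*(p+1)) = X (2*(q+1)+1)" using assms[rule_format, of 2] by (simp add: algebra_simps)
  have e3: "X (2*(p+1)+1) = X (2*(q+2))"
  proof -
    have "X (2*p+3) = X (2*q+1+3)" using assms by simp
    moreover have "2*p+3 = 2*(p+1)+1" "2*q+1+3 = 2*(q+2)" by simp_all
    ultimately show ?thesis by metis
  qed
  have "X q = X (q+1)" using e0 e1 X_2n0[of p] X_2n1[of q] X_2n1[of p] X_2n0[of "q+1"] X_le[of p] X_le[of q]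
    by arith
  moreover have "X (q+1) = X (q+2)" using e2 e3 X_2n0[of "p+1"] X_2n1[of "q+1"] X_2n1[of "p+1"]
     X_2n0[of "q+2"] X_le[of "p+1"] X_le[of "q+1"]
    by arith
  ultimately show False using no_cube by blast
qed

lemma base: assumes "\<forall>r<L. X (a + r) = X (b + r)" "4 \<le> L" shows "a mod 2 = b mod 2"
proof (rule ccontr)
  assume ne: "a mod 2 \<noteq> b mod 2"
  show False
  proof (cases "even a")
    case True
    then obtain p where p: "a = 2*p" by auto
    from True ne have "odd b" by presburger
    then obtain q where q: "b = 2*q+1" using oddE by blast
    show False using base_eo[of p q] assms p q by auto
  next
    case False
    then obtain p where p: "a = 2*p+1" using oddE by blast
    from False ne have "even b" by presburger
    then obtain q where q: "b = 2*q" by auto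
    show False using base_eo[of q p] assms p q by (auto simp: eq_commute)
  qed
qed

lemma recog: assumes "\<forall>r<L. X (a + r) = X (b + r)" "3 * 2^s < L"
  shows "a mod 2^(s+1) = b mod 2^(s+1)"
  using assms
proof (induction s arbitrary: a b L)
  case 0
  then show ?case using base[of L a b] by simp
next
  case (Suc s)
  have L4: "4 \<le> L" using Suc.prems(2) proof -
    have "2 \<le> (2::nat)^Suc s" by simp
    then show ?thesis using Suc.prems(2) by linarith
  qed
  have ab: "a mod 2 = b mod 2" using base[OF Suc.prems(1) L4] .
  define e where "e = a mod 2"
  have e2: "e < 2" unfolding e_def by simp
  have a: "a = 2*(a div 2) + e" unfolding e_def by simp
  have b: "b = 2*(b div 2) + e" unfolding e_def using ab by simp
  have h: "\<forall>r<(L+1) div 2. X (a div 2 + r) = X (b div 2 + r)"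
  proof (intro allI impI)
    fix r assume r: "r < (L+1) div 2"
    have "2*r < L" using r by linarith
    then have "X (a + 2*r) = X (b + 2*r)" using Suc.prems(1) by blast
    moreover have "a + 2*r = 2*(a div 2 + r) + e" using a by presburger
    moreover have "b + 2*r = 2*(b div 2 + r) + e" using b by presburger
    ultimately have "(X (a div 2 + r) + e) mod 2 = (X (b div 2 + r) + e) mod 2"
      using X_2n[OF e2] by metis
    then show "X (a div 2 + r) = X (b div 2 + r)"
      using X_le[of "a div 2 + r"] X_le[of "b div 2 + r"] e2 by presburger
  qed
  have "3 * 2^s < (L+1) div 2" using Suc.prems(2) by simp
  then have ih: "a div 2 mod 2^(s+1) = b div 2 mod 2^(s+1)" using Suc.IH[OF h] by blast
  have A: "a mod (2 * 2^(s+1)) = 2 * (a div 2 mod 2^(s+1)) + a mod 2" by (rule mod_mult2_eq)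
  have B: "b mod (2 * 2^(s+1)) = 2 * (b div 2 mod 2^(s+1)) + b mod 2" by (rule mod_mult2_eq)
  have p: "(2::nat)^(Suc s + 1) = 2 * 2^(s+1)" by simp
  show ?case unfolding p A B ih ab by (rule refl)
qed


lemma thue_Suc: "thue (Suc n) = X n" by (simp add: thue_def X_def)

lemma tm_map: "tm_factor 1 N = map X [0..<N]"
proof -
  have "[1..<N+1] = map Suc [0..<N]" by (simp add: map_Suc_upt)
  then show ?thesis unfolding tm_factor_def by (simp add: comp_def thue_Suc)
qed

lemma block: assumes "i < k"
  shows "take m (drop (i*m) (map X [0..<k*m])) = map X [i*m..<i*m+m]"
proof -
  have "(i+1)*m \<le> k*m" using assms by (intro mult_le_mono1) simp
  then have "i*m + m \<le> k*m" by simp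
  then show ?thesis by (simp add: take_map drop_map take_upt)
qed

lemma blockeq: "(map X [a..<a+m] = map X [b..<b+m]) \<longleftrightarrow> (\<forall>r<m. X (a+r) = X (b+r))"
  by (simp add: list_eq_iff_nth_eq)

lemma FF_iff: assumes "k > 0"
  shows "m \<in> FF k \<longleftrightarrow> odd m \<and> (\<forall>i<k. \<forall>j<k. i \<noteq> j \<longrightarrow> \<not> (\<forall>r<m. X (i*m+r) = X (j*m+r)))"
proof -
  have len: "length (tm_factor 1 (k*m)) = k*m" unfolding tm_map by simp
  have dv: "k*m div k = m" "k*m mod k = 0" using assms by simp_all
  have bl: "\<And>i j. i < k \<Longrightarrow> j < k \<Longrightarrow>
     (take m (drop (i*m) (map X [0..<k*m])) \<noteq> take m (drop (j*m) (map X [0..<k*m]))) \<longleftrightarrow>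
     \<not> (\<forall>r<m. X (i*m+r) = X (j*m+r))"
    by (simp only: block blockeq)
  have "anti_power k (tm_factor 1 (k*m)) \<longleftrightarrow>
     (\<forall>i<k. \<forall>j<k. i \<noteq> j \<longrightarrow> \<not> (\<forall>r<m. X (i*m+r) = X (j*m+r)))"
    unfolding anti_power_def len tm_map Let_def dv using assms bl by auto
  then show ?thesis unfolding FF_def by simp
qed

lemma pow2_odd: "(d::nat) > 0 \<Longrightarrow> \<exists>v c. d = 2^v * c \<and> odd c"
proof (induction d rule: less_induct)
  case (less d)
  show ?case
  proof (cases "even d")
    case True
    then obtain d' where d': "d = 2*d'" by auto
    then have "d' < d" "d' > 0" using less.prems by auto
    then obtain v c where "d' = 2^v * c" "odd c" using less.IH by blast
    then show ?thesis using d' by (intro exI[of _ "Suc v"] exI[of _ c]) auto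
  next
    case False
    then show ?thesis by (intro exI[of _ 0] exI[of _ d]) auto
  qed
qed

lemma upper: assumes "k \<ge> 3" "odd m" "3*k - 4 < m" "i < j" "j < k"
  shows "\<not> (\<forall>r<m. X (i*m+r) = X (j*m+r))"
proof
  assume eq: "\<forall>r<m. X (i*m+r) = X (j*m+r)"
  obtain v c where d: "j - i = 2^v * c" and c: "odd c" using pow2_odd[of "j-i"] assms by auto
  have "c \<ge> 1" using c by (cases c) auto
  then have "2^v \<le> j - i" using d by (metis mult.right_neutral mult_le_mono2)
  then have pv: "2^v \<le> k - 1" using assms by linarith
  have "3 * 2^v < m"
  proof -
    have m3: "3*(k-1) \<le> m" using assms by linarith
    have "3 * 2^v \<le> m" using pv m3 by linarith
    moreover have "3 * 2^v \<noteq> m"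
    proof
      assume h: "3*2^v = m"
      then have "v = 0" using assms(2) by (cases v) auto
      then show False using h m3 assms(1) by simp
    qed
    ultimately show ?thesis by linarith
  qed
  then have mm: "i*m mod 2^(v+1) = j*m mod 2^(v+1)" using recog[OF eq] by blast
  have le: "i*m \<le> j*m" using assms by simp
  have "(j*m mod 2^(v+1) = i*m mod 2^(v+1)) = (2^(v+1) dvd j*m - i*m)"
    by (rule mod_eq_dvd_iff_nat[OF le])
  then have dv1: "2^(v+1) dvd j*m - i*m" using mm by simp
  have "j*m - i*m = (j-i)*m" by (simp add: diff_mult_distrib)
  then have eqd: "j*m - i*m = 2^v * (c*m)" using d by simp
  have dv: "2^v * 2 dvd 2^v * (c*m)" using dv1 unfolding eqd by simp
  have "2 dvd c*m" using dv nat_mult_dvd_cancel1[of "2^v" 2 "c*m"] by simp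
  then show False using c assms(2) by simp
qed

lemma S_bound: assumes "k \<ge> 3" "m \<in> {m. odd m} - FF k" shows "m \<le> 3*k - 4"
proof (rule ccontr)
  assume "\<not> m \<le> 3*k-4"
  then have big: "3*k-4 < m" by simp
  have om: "odd m" using assms by simp
  have "m \<notin> FF k" using assms by simp
  then obtain i j where ij: "i<k" "j<k" "i\<noteq>j" "\<forall>r<m. X (i*m+r) = X (j*m+r)"
    using FF_iff[of k m] assms(1) om by auto
  show False
  proof (cases "i < j")
    case True then show ?thesis using upper[OF assms(1) om big True ij(2)] ij(4) by blast
  next
    case False
    then have "j < i" using ij by simp
    then show ?thesis using upper[OF assms(1) om big _ ij(1), of j] ij(4) by (simp add: eq_commute)
  qed
qed

lemma one_in_S: assumes "k \<ge> 3" shows "1 \<in> {m. odd m} - FF k"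
proof -
  have "X 1 = X 2"
    using X_2n1[of 0] X_2n0[of 1] by (simp add: X_def)
  moreover have "\<not> (\<forall>i<k. \<forall>j<k. i \<noteq> j \<longrightarrow> \<not> (\<forall>r<(1::nat). X (i*1+r) = X (j*1+r)))"
  proof
    assume H: "\<forall>i<k. \<forall>j<k. i \<noteq> j \<longrightarrow> \<not> (\<forall>r<(1::nat). X (i*1+r) = X (j*1+r))"
    have "\<not> (\<forall>r<(1::nat). X (1*1+r) = X (2*1+r))" using H assms by simp
    then show False using \<open>X 1 = X 2\<close> by simp
  qed
  ultimately have "\<not> (\<forall>i<k. \<forall>j<k. i \<noteq> j \<longrightarrow> \<not> (\<forall>r<(1::nat). X (i*1+r) = X (j*1+r)))" by blast
  then show ?thesis using FF_iff[of k 1] assms by auto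
qed

lemma part1: assumes "k \<ge> 3"
  shows "{m. odd m} - FF k \<noteq> {} \<and> finite ({m. odd m} - FF k) \<and> Gamma k \<le> 3*k - 4"
proof -
  have ne: "{m. odd m} - FF k \<noteq> {}" using one_in_S[OF assms] by blast
  have sub: "{m. odd m} - FF k \<subseteq> {..3*k-4}" using S_bound[OF assms] by blast
  have "Gamma k \<le> 3*k-4" unfolding Gamma_def
    by (rule cSup_least[OF ne]) (use S_bound[OF assms] in blast)
  then show ?thesis using ne finite_subset[OF sub] by blast
qed


lemma pc_small: "popcount 1 = 1" "popcount 2 = 1" "popcount 3 = 2" "popcount 4 = 1" "popcount 5 = 2"
  by (simp_all add: popcount.simps)

lemma X_split: assumes "r < 2^a" shows "X (2^a * q + r) = (X q + X r) mod 2"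
  unfolding X_def popcount_pow[OF assms] by (simp add: mod_add_eq)

lemma family:
  fixes w :: nat
  assumes w: "w \<ge> 3"
  defines "B \<equiv> (2::nat)^w"
  shows "3*B*B+1-B \<in> {m. odd m} - FF (B*B+B+2)"
proof -
  define m where "m = 3*B*B+1-B"
  define k where "k = B*B+B+2"
  have "(2::nat)^3 \<le> 2^w" by (rule power_increasing[OF w]) simp
  then have B8: "8 \<le> B" unfolding B_def by simp
  have BB: "B \<le> 3*B*B"
  proof -
    have "B \<le> B*B" by (rule le_square)
    moreover have "3*B*B = 3*(B*B)" by simp
    ultimately show ?thesis by linarith
  qed
  have hm: "m + B = 3*B*B+1" unfolding m_def using BB by (metis le_add_diff_inverse2 trans_le_add1)
  have evB: "even B" unfolding B_def using w by (cases w) auto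
  have om: "odd m"
  proof -
    have "odd (m + B)" unfolding hm using evB by simp
    then show ?thesis using evB by simp
  qed
  define P where "P = B*B"
  have P2: "P = 2^(2*w)" unfolding P_def B_def by (simp add: mult_2 power_add)
  have mP: "m < 3*P" unfolding P_def using hm B8 by linarith
  have key1: "(B+1)*m = P*(3*B+2) + 1"
  proof -
    have "int (m + B) = int (3*B*B+1)" unfolding hm by (rule refl)
    then have "int m + int B = 3*int B*int B + 1" by simp
    then have mm: "int m = 3*int B*int B + 1 - int B" by linarith
    have "int ((B+1)*m) = (int B + 1) * int m" by (simp add: algebra_simps)
    also have "\<dots> = (int B + 1) * (3*int B*int B + 1 - int B)" by (simp only: mm)
    also have "\<dots> = int (P*(3*B+2) + 1)" unfolding P_def by (simp add: algebra_simps)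
    finally show ?thesis by (simp only: of_nat_eq_iff)
  qed
  have key2: "\<And>t. 3*B+2+t+m = B*(3*B+2) + (3+t)"
  proof -
    fix t
    have "int (m + B) = int (3*B*B+1)" unfolding hm by (rule refl)
    then have "int m + int B = 3*int B*int B + 1" by simp
    then have mm: "int m = 3*int B*int B + 1 - int B" by linarith
    have "int (3*B+2+t+m) = 3*int B+2+int t+int m" by simp
    also have "\<dots> = 3*int B+2+int t+(3*int B*int B + 1 - int B)" by (simp only: mm)
    also have "\<dots> = int (B*(3*B+2) + (3+t))" by (simp add: algebra_simps)
    finally show "3*B+2+t+m = B*(3*B+2) + (3+t)" by (simp only: of_nat_eq_iff)
  qed
  have Xt: "X (3*B+2+t) = X (3*B+2+t+m)" if t: "t < 3" for t
  proof -
    have s1: "2+t < 2^w" using t B8 unfolding B_def by linarith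
    have s2: "3+t < 2^w" using t B8 unfolding B_def by linarith
    have s3: "(2::nat) < 2^w" using B8 unfolding B_def by linarith
    have q1: "3*B+2+t = 2^w*3 + (2+t)" unfolding B_def by simp
    have a1: "X (3*B+2+t) = (X 3 + X (2+t)) mod 2"
      unfolding q1 by (rule X_split[OF s1])
    have a2: "X (3*B+2+t+m) = (X (3*B+2) + X (3+t)) mod 2"
      unfolding key2 unfolding B_def by (rule X_split[OF s2])
    have q3: "3*B+2 = 2^w*3 + 2" unfolding B_def by simp
    have a3: "X (3*B+2) = (X 3 + X 2) mod 2"
      unfolding q3 by (rule X_split[OF s3])
    have "t = 0 \<or> t = 1 \<or> t = 2" using t by auto
    have Xs: "X 2 = 1" "X 3 = 0" "X 4 = 1" "X 5 = 0" by (simp_all add: X_def pc_small)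
    show ?thesis using \<open>t = 0 \<or> t = 1 \<or> t = 2\<close>
    proof (elim disjE)
      assume "t = 0" then show ?thesis using a1 a2 a3 Xs by simp
    next
      assume "t = 1" then show ?thesis using a1 a2 a3 Xs by simp
    next
      assume "t = 2" then show ?thesis using a1 a2 a3 Xs by simp
    qed
  qed
  have blk: "\<forall>r<m. X ((B+1)*m + r) = X ((B*B+B+1)*m + r)"
  proof (intro allI impI)
    fix r assume r: "r < m"
    define u where "u = 1 + r"
    define t where "t = u div P"
    define r' where "r' = u mod P"
    have Ppos: "P > 0" unfolding P_def using B8 by simp
    have t3: "t < 3" unfolding t_def u_def using r mP Ppos by (simp add: div_less_iff_less_mult)
    have u: "u = P*t + r'" unfolding t_def r'_def by simp
    have r'P: "r' < 2^(2*w)" unfolding r'_def using Ppos P2 by simp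
    have e1: "(B+1)*m + r = 2^(2*w) * (3*B+2+t) + r'"
      using key1 u unfolding u_def P2[symmetric] by (simp add: algebra_simps)
    have e2: "(B*B+B+1)*m + r = 2^(2*w) * (3*B+2+t+m) + r'"
    proof -
      have h: "(B*B+B+1)*m = (B+1)*m + P*m" unfolding P_def by (simp add: algebra_simps)
      have "(B*B+B+1)*m + r = P*(3*B+2) + P*m + u" using h key1 unfolding u_def by linarith
      also have "\<dots> = P*(3*B+2) + P*m + (P*t + r')" using u by simp
      also have "\<dots> = P*(3*B+2+t+m) + r'" by (simp add: algebra_simps)
      finally show ?thesis unfolding P2 .
    qed
    show "X ((B+1)*m + r) = X ((B*B+B+1)*m + r)"
      unfolding e1 e2 X_split[OF r'P] using Xt[OF t3] by simp
  qed
  have "m \<notin> FF k"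
  proof
    assume "m \<in> FF k"
    then have "\<forall>i<k. \<forall>j<k. i \<noteq> j \<longrightarrow> \<not> (\<forall>r<m. X (i*m+r) = X (j*m+r))"
      using FF_iff[of k m] unfolding k_def by simp
    moreover have "B+1 < k" "B*B+B+1 < k" "B+1 \<noteq> B*B+B+1" unfolding k_def using B8 by simp_all
    ultimately show False using blk by blast
  qed
  then show ?thesis using om unfolding m_def k_def by simp
qed



lemma lim_ratio: "((\<lambda>n::nat. (3*(2^(n+3))^2 + 1 - 2^(n+3)) / ((2^(n+3))^2 + 2^(n+3) + 2) :: real) \<longlonglongrightarrow> 3)"
  by real_asymp

lemma limsup_part:
  assumes P1: "\<forall>k::nat. k \<ge> 3 \<longrightarrow>
            ({m. odd m} - FF k \<noteq> {} \<and> finite ({m. odd m} - FF k) \<and> Gamma k \<le> 3*k - 4)"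
  shows "limsup (\<lambda>k. ereal (real (Gamma k) / real k)) = 3"
proof (rule antisym)
  define f where "f = (\<lambda>k. ereal (real (Gamma k) / real k))"
  show "limsup (\<lambda>k. ereal (real (Gamma k) / real k)) \<le> 3"
  proof (rule Limsup_bounded)
    show "\<forall>\<^sub>F k in sequentially. ereal (real (Gamma k) / real k) \<le> 3"
      unfolding eventually_sequentially
    proof (intro exI allI impI)
      fix k :: nat assume k: "3 \<le> k"
      then have "Gamma k \<le> 3*k" using P1 by auto
      then have "real (Gamma k) \<le> 3 * real k" by linarith
      then have "real (Gamma k) / real k \<le> 3" using k by (simp add: divide_le_eq)
      then show "ereal (real (Gamma k) / real k) \<le> 3" by simp
    qed
  qed
  define B where "B = (\<lambda>n::nat. (2::nat)^(n+3))"
  define r where "r = (\<lambda>n. B n * B n + B n + 2)"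
  define mm where "mm = (\<lambda>n. 3 * B n * B n + 1 - B n)"
  have Bs: "B (Suc n) = 2 * B n" for n unfolding B_def by (simp add: power_add)
  have Bpos: "B n > 0" for n unfolding B_def by simp
  have sm: "strict_mono r"
  proof (rule strict_mono_Suc_iff[THEN iffD2], intro allI)
    fix n
    have "B n < B (Suc n)" using Bs Bpos by (metis lessI mult_2 less_add_same_cancel1)
    moreover have "B n * B n < B (Suc n) * B (Suc n)" using calculation by (intro mult_strict_mono) auto
    ultimately show "r n < r (Suc n)" unfolding r_def by linarith
  qed
  have lo: "mm n \<le> Gamma (r n)" for n
  proof -
    have "mm n \<in> {m. odd m} - FF (r n)"
      using family[of "n+3"] unfolding mm_def r_def B_def by simp
    moreover have "r n \<ge> 3" unfolding r_def using Bpos[of n] by simp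
    then have "finite ({m. odd m} - FF (r n))" using P1 by blast
    ultimately show ?thesis unfolding Gamma_def by (rule le_cSup_finite[rotated])
  qed
  have g_le: "ereal (real (mm n) / real (r n)) \<le> (f \<circ> r) n" for n
  proof -
    have "real (mm n) \<le> real (Gamma (r n))" using lo by simp
    then have "real (mm n) / real (r n) \<le> real (Gamma (r n)) / real (r n)"
      by (intro divide_right_mono) auto
    then show ?thesis unfolding f_def by simp
  qed
  have le3: "(f \<circ> r) n \<le> 3" for n
  proof -
    have "r n \<ge> 3" unfolding r_def using Bpos[of n] by simp
    then have "Gamma (r n) \<le> 3 * r n" using P1 by auto
    then have "real (Gamma (r n)) \<le> 3 * real (r n)" by linarith
    then have "real (Gamma (r n)) / real (r n) \<le> 3" using \<open>r n \<ge> 3\<close> by (simp add: divide_le_eq)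
    then show ?thesis unfolding f_def by simp
  qed
  have gl: "(\<lambda>n. real (mm n) / real (r n)) \<longlonglongrightarrow> 3"
  proof -
    have eq: "real (mm n) / real (r n) =
      (3*(2^(n+3))^2 + 1 - 2^(n+3)) / ((2^(n+3))^2 + 2^(n+3) + 2)" for n
    proof -
      have "B n \<le> 3 * B n * B n + 1"
      proof -
        have "B n \<le> B n * B n" by (rule le_square)
        moreover have "3 * B n * B n = 3 * (B n * B n)" by simp
        ultimately show ?thesis by linarith
      qed
      then have "real (mm n) = 3 * real (B n) * real (B n) + 1 - real (B n)"
        unfolding mm_def by (simp add: of_nat_diff)
      moreover have "real (B n) = 2^(n+3)" unfolding B_def by simp
      ultimately show ?thesis unfolding r_def by (simp add: power2_eq_square algebra_simps)
    qed
    show ?thesis unfolding eq by (rule lim_ratio)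
  qed
  have "(f \<circ> r) \<longlonglongrightarrow> 3"
  proof (rule tendsto_sandwich[of "\<lambda>n. ereal (real (mm n) / real (r n))" _ _ "\<lambda>n. 3"])
    show "\<forall>\<^sub>F n in sequentially. ereal (real (mm n) / real (r n)) \<le> (f \<circ> r) n"
      using g_le by simp
    show "\<forall>\<^sub>F n in sequentially. (f \<circ> r) n \<le> 3" using le3 by simp
    show "(\<lambda>n. ereal (real (mm n) / real (r n))) \<longlonglongrightarrow> 3"
      using tendsto_ereal[OF gl] by simp
    show "((\<lambda>n. 3) \<longlongrightarrow> (3::ereal)) sequentially" by simp
  qed
  then have "limsup (f \<circ> r) = 3" by (intro lim_imp_Limsup) simp_all
  then have "3 \<le> limsup f" using limsup_subseq_mono[OF sm, of f] by simp
  then show "3 \<le> limsup (\<lambda>k. ereal (real (Gamma k) / real k))" unfolding f_def .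
qed


theorem theorem1:
  shows "(\<forall>k::nat. k \<ge> 3 \<longrightarrow>
            ({m. odd m} - FF k \<noteq> {} \<and> finite ({m. odd m} - FF k) \<and> Gamma k \<le> 3*k - 4))
         \<and> limsup (\<lambda>k. ereal (real (Gamma k) / real k)) = 3"
proof -
  have P1: "\<forall>k::nat. k \<ge> 3 \<longrightarrow>
            ({m. odd m} - FF k \<noteq> {} \<and> finite ({m. odd m} - FF k) \<and> Gamma k \<le> 3*k - 4)"
    using part1 by blast
  then show ?thesis using limsup_part[OF P1] by blast
qed

end
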